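(* Let $(\mathcal{X},d)$ be a Polish space and $\mu$ a Borel probability measure on $\mathcal{X}$. For $a>0$ define $F_a(\nu)=\sqrt{aH(\nu|\mu)}-W_2(\nu,\mu)$ for $\nu\in\mathcal{P}_\mu(\mathcal{X})$, and let $\mathrm{Argmin}(F_a)$ denote the (possibly empty) set of $\underline{\nu}\in\mathcal{P}_\mu(\mathcal{X})$ such that $F_a(\underline{\nu})=\inf_{\nu\in\mathcal{P}_\mu(\mathcal{X})}F_a(\nu)$. Then: (1) $F_a$ is bounded from below on $\mathcal{P}_\mu(\mathcal{X})$ as soon as $\iint e^{d^2(x,y)/a}\,\mu(dx)\mu(dy)<\infty$. (2) $\mu$ satisfies $\mathbf{T}_2(a)$ if and only if $\mu\in\mathrm{Argmin}(F_a)$. (3) $\mu$ satisfies $\mathbf{T}_2(a)$ if and only if $\mathrm{Argmin}(F_{a'})=\{\mu\}$ for all $a'>a$.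
   Context: $\mathcal{P}(\mathcal{X})$ is the set of Borel probability measures on $\mathcal{X}$. The relative entropy is $H(\nu|\mu)=\int\log(d\nu/d\mu)\,d\nu$ if $\nu\ll\mu$ and $+\infty$ otherwise; $\mathcal{P}_\mu(\mathcal{X})=\{\nu\in\mathcal{P}(\mathcal{X}):H(\nu|\mu)<\infty\}$. $W_2^2(\nu,\mu)=\inf_\pi\iint d^2(x,y)\,\pi(dxdy)\in[0,\infty]$, the infimum over all couplings $\pi$ of $\nu$ and $\mu$. A probability $\mu$ satisfies $\mathbf{T}_2(C)$ ($C>0$) if $W_2(\nu,\mu)\le\sqrt{C\,H(\nu|\mu)}$ for every $\nu\in\mathcal{P}(\mathcal{X})$. *)

theory Defs
  imports "HOL-Probability.Probability"
begin

definition Pr :: "'a::topological_space measure set" where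
  "Pr = {\<nu>. prob_space \<nu> \<and> sets \<nu> = sets borel}"

definition rel_entropy :: "'a measure \<Rightarrow> 'a measure \<Rightarrow> ereal" where
  "rel_entropy \<nu> \<mu> =
     (if absolutely_continuous \<mu> \<nu> then
        enn2ereal (\<integral>\<^sup>+ x. ennreal (ln (enn2real (RN_deriv \<mu> \<nu> x))) \<partial>\<nu>)
        - enn2ereal (\<integral>\<^sup>+ x. ennreal (- ln (enn2real (RN_deriv \<mu> \<nu> x))) \<partial>\<nu>)
      else \<infinity>)"

definition Pr_fin :: "'a::topological_space measure \<Rightarrow> 'a measure set" where
  "Pr_fin \<mu> = {\<nu> \<in> Pr. rel_entropy \<nu> \<mu> < \<infinity>}"

definition couplings :: "'a::topological_space measure \<Rightarrow> 'a measure \<Rightarrow> ('a \<times> 'a) measure set" where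
  "couplings \<nu> \<mu> = {\<pi>. sets \<pi> = sets (borel \<Otimes>\<^sub>M borel) \<and>
       distr \<pi> borel fst = \<nu> \<and> distr \<pi> borel snd = \<mu>}"

definition W2sq :: "'a::metric_space measure \<Rightarrow> 'a measure \<Rightarrow> ennreal" where
  "W2sq \<nu> \<mu> = (INF \<pi> \<in> couplings \<nu> \<mu>. \<integral>\<^sup>+ p. ennreal ((dist (fst p) (snd p))\<^sup>2) \<partial>\<pi>)"

definition W2 :: "'a::metric_space measure \<Rightarrow> 'a measure \<Rightarrow> ereal" where
  "W2 \<nu> \<mu> = (if W2sq \<nu> \<mu> = \<top> then \<infinity> else ereal (sqrt (enn2real (W2sq \<nu> \<mu>))))"

text \<open>Transport inequality T_2(C): W_2(nu,mu) \<le> sqrt(C H(nu|mu)) for all nu,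
  stated in the equivalent squared form W_2^2 \<le> C H (both sides in [0, infinity]).\<close>
definition T2 :: "real \<Rightarrow> 'a::metric_space measure \<Rightarrow> bool" where
  "T2 C \<mu> \<longleftrightarrow> (\<forall>\<nu> \<in> Pr. enn2ereal (W2sq \<nu> \<mu>) \<le> ereal C * rel_entropy \<nu> \<mu>)"

text \<open>F_a(nu) = sqrt(a H(nu|mu)) - W_2(nu,mu), for nu in P_mu (so H finite).\<close>
definition F :: "real \<Rightarrow> 'a::metric_space measure \<Rightarrow> 'a measure \<Rightarrow> ereal" where
  "F a \<mu> \<nu> = ereal (sqrt (a * real_of_ereal (rel_entropy \<nu> \<mu>))) - W2 \<nu> \<mu>"

definition Argmin :: "real \<Rightarrow> 'a::metric_space measure \<Rightarrow> 'a measure set" where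
  "Argmin a \<mu> = {\<nu> \<in> Pr_fin \<mu>. F a \<mu> \<nu> = (INF \<nu>' \<in> Pr_fin \<mu>. F a \<mu> \<nu>')}"

end

theory Submission
  imports Defs
begin


lemma L1: "0 \<le> (u::real) \<Longrightarrow> u * (- ln u) \<le> 1"
proof -
  assume u: "0 \<le> u"
  show ?thesis
  proof (cases "u = 0")
    case False
    then have "0 < u" using u by simp
    have "ln (1/u) \<le> 1/u - 1" using \<open>0<u\<close> by (intro ln_le_minus_one) simp
    then have "- ln u \<le> 1/u - 1" using \<open>0<u\<close> by (simp add: ln_div)
    then have "u * (- ln u) \<le> u * (1/u - 1)" using u by (rule mult_left_mono)
    also have "\<dots> = 1 - u" using \<open>0<u\<close> by (simp add: field_simps)
    finally show ?thesis using u by simp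
  qed simp
qed

lemma L2: "0 \<le> (u::real) \<Longrightarrow> 0 \<le> u * ln u - u + 1"
proof -
  assume u: "0 \<le> u"
  show ?thesis
  proof (cases "u = 0")
    case False
    then have "0 < u" using u by simp
    have "ln (1/u) \<le> 1/u - 1" using \<open>0<u\<close> by (intro ln_le_minus_one) simp
    then have "- ln u \<le> 1/u - 1" using \<open>0<u\<close> by (simp add: ln_div)
    then have "u * (- ln u) \<le> u * (1/u - 1)" using u by (rule mult_left_mono)
    also have "\<dots> = 1 - u" using \<open>0<u\<close> by (simp add: field_simps)
    finally show ?thesis by simp
  qed simp
qed

lemma L3: "0 \<le> (u::real) \<Longrightarrow> u * ln u - u + 1 = 0 \<Longrightarrow> u = 1"
proof -
  assume u: "0 \<le> u" and e: "u * ln u - u + 1 = 0"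
  show ?thesis
  proof (cases "u = 0")
    case False
    then have "0 < u" using u by simp
    have "ln (1/u) = - ln u" using \<open>0<u\<close> by (simp add: ln_div)
    also have "\<dots> = (1 - u) / u" using e \<open>0<u\<close> by (simp add: field_simps)
    also have "\<dots> = 1/u - 1" using \<open>0<u\<close> by (simp add: field_simps)
    finally have "1/u = 1" using \<open>0<u\<close> by (intro ln_eq_minus_one) auto
    then show ?thesis by simp
  qed (use e in simp)
qed

lemma L4: "0 \<le> (u::real) \<Longrightarrow> 0 < a \<Longrightarrow> u * d + a * (u * (- ln u)) \<le> a * exp (d / a)"
proof -
  assume u: "0 \<le> u" and a: "0 < a"
  show ?thesis
  proof (cases "u = 0")
    case False
    then have "0 < u" using u by simp
    have "1 + (d/a - ln u) \<le> exp (d/a - ln u)" by (rule exp_ge_add_one_self)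
    also have "\<dots> = exp (d/a) / u" using \<open>0<u\<close> by (simp add: exp_diff)
    finally have "u * (1 + (d/a - ln u)) \<le> exp (d/a)" using \<open>0<u\<close> by (simp add: field_simps)
    then have "a * (u * (1 + (d/a - ln u))) \<le> a * exp (d/a)" using a by simp
    moreover have "a * (u * (1 + (d/a - ln u))) = a*u + u * d + a * (u * (- ln u))"
      using a by (simp add: field_simps)
    moreover have "0 \<le> a*u" using a u by simp
    ultimately show ?thesis by linarith
  qed (use a in simp)
qed

lemma E_bound: "0 \<le> (u::real) \<Longrightarrow> ennreal u * ennreal (- ln u) \<le> 1"
proof -
  assume u: "0 \<le> u"
  show ?thesis
  proof (cases "0 \<le> - ln u")
    case True
    then have "ennreal u * ennreal (- ln u) = ennreal (u * (- ln u))" using u by (simp only: ennreal_mult[OF u True])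
    also have "\<dots> \<le> ennreal 1" using L1[OF u] by (intro ennreal_leI)
    finally show ?thesis by simp
  next
    case False then show ?thesis by (simp add: ennreal_neg)
  qed
qed

lemma E_id: "0 \<le> (u::real) \<Longrightarrow>
  ennreal u * ennreal (ln u) + 1 = ennreal u * ennreal (- ln u) + ennreal u + ennreal (u * ln u - u + 1)"
proof -
  assume u: "0 \<le> u"
  have p: "0 \<le> u * ln u - u + 1" using L2[OF u] .
  show ?thesis
  proof (cases "0 \<le> ln u")
    case True
    have "ennreal u * ennreal (ln u) + 1 = ennreal (u * ln u) + ennreal 1"
      using u True by (simp add: ennreal_mult)
    also have "\<dots> = ennreal (u * ln u + 1)" using u True by (intro ennreal_plus[symmetric]) simp_all
    also have "\<dots> = ennreal (u + (u * ln u - u + 1))" by simp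
    also have "\<dots> = ennreal u + ennreal (u * ln u - u + 1)" using ennreal_plus[OF u p] .
    finally show ?thesis using True by (simp add: ennreal_neg)
  next
    case False
    have m: "0 \<le> - ln u" using False by simp
    have um: "0 \<le> u * (- ln u)" using u m by (rule mult_nonneg_nonneg)
    have "ennreal u * ennreal (- ln u) + ennreal u + ennreal (u * ln u - u + 1)
       = ennreal (u * (- ln u)) + ennreal u + ennreal (u * ln u - u + 1)"
      by (simp only: ennreal_mult[OF u m])
    also have "\<dots> = ennreal (u * (- ln u) + u) + ennreal (u * ln u - u + 1)"
      by (simp only: ennreal_plus[OF um u])
    also have "\<dots> = ennreal (u * (- ln u) + u + (u * ln u - u + 1))"
      using um u p by (intro ennreal_plus[symmetric]) simp_all
    also have "\<dots> = 1" by simp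
    finally show ?thesis using False by (simp add: ennreal_neg)
  qed
qed

lemma E_young: "0 \<le> (u::real) \<Longrightarrow> 0 \<le> d \<Longrightarrow> 0 < a \<Longrightarrow>
  ennreal u * ennreal d + ennreal a * (ennreal u * ennreal (- ln u))
    \<le> ennreal a * (ennreal u * ennreal (ln u)) + ennreal a * ennreal (exp (d / a))"
proof -
  assume u: "0 \<le> u" and d: "0 \<le> d" and a: "0 < a"
  have y: "u * d + a * (u * (- ln u)) \<le> a * exp (d / a)" using L4[OF u a] .
  show ?thesis
  proof (cases "0 \<le> ln u")
    case True
    have "ennreal u * ennreal d + ennreal a * (ennreal u * ennreal (- ln u)) = ennreal (u * d)"
      using u d True by (simp add: ennreal_mult ennreal_neg)
    also have "\<dots> \<le> ennreal (a * (u * ln u) + a * exp (d / a))"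
      using y u a by (intro ennreal_leI) (simp add: algebra_simps)
    also have "\<dots> = ennreal (a * (u * ln u)) + ennreal (a * exp (d / a))"
      using u a True by (intro ennreal_plus) simp_all
    also have "\<dots> = ennreal a * (ennreal u * ennreal (ln u)) + ennreal a * ennreal (exp (d / a))"
      using u a True by (simp add: ennreal_mult)
    finally show ?thesis .
  next
    case False
    have m: "0 \<le> - ln u" using False by simp
    have um: "0 \<le> a * (u * (- ln u))" using u m a by (intro mult_nonneg_nonneg) simp_all
    have "ennreal u * ennreal d + ennreal a * (ennreal u * ennreal (- ln u))
        = ennreal (u * d) + ennreal (a * (u * (- ln u)))"
      using u d a m by (simp only: ennreal_mult[OF u d] ennreal_mult[OF u m]
           ennreal_mult[of a "u * (- ln u)"] mult_nonneg_nonneg less_imp_le)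
    also have "\<dots> = ennreal (u * d + a * (u * (- ln u)))"
      using u d um by (intro ennreal_plus[symmetric]) simp_all
    also have "\<dots> \<le> ennreal (a * exp (d / a))" using y by (intro ennreal_leI)
    also have "\<dots> \<le> ennreal a * (ennreal u * ennreal (ln u)) + ennreal a * ennreal (exp (d / a))"
      using a by (simp add: ennreal_mult)
    finally show ?thesis .
  qed
qed




locale ent =
  fixes \<mu> \<nu> :: "'a measure"
  assumes pm: "prob_space \<mu>" and pn: "prob_space \<nu>" and se: "sets \<nu> = sets \<mu>"
    and ac: "absolutely_continuous \<mu> \<nu>"
begin

definition "f x = enn2real (RN_deriv \<mu> \<nu> x)"
definition "P = (\<integral>\<^sup>+ x. ennreal (ln (f x)) \<partial>\<nu>)"
definition "N = (\<integral>\<^sup>+ x. ennreal (- ln (f x)) \<partial>\<nu>)"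

lemma f_meas[measurable]: "f \<in> borel_measurable \<mu>"
  unfolding f_def by measurable

lemma f_nonneg: "0 \<le> f x" unfolding f_def by simp

lemma dens: "\<nu> = density \<mu> (\<lambda>x. ennreal (f x))"
proof -
  interpret M: prob_space \<mu> by (rule pm)
  have "density \<mu> (RN_deriv \<mu> \<nu>) = \<nu>" by (rule M.density_RN_deriv[OF ac se])
  moreover have "AE x in \<mu>. RN_deriv \<mu> \<nu> x \<noteq> \<infinity>"
    by (rule M.RN_deriv_finite[OF prob_space_imp_sigma_finite[OF pn] ac se])
  then have "density \<mu> (RN_deriv \<mu> \<nu>) = density \<mu> (\<lambda>x. ennreal (f x))"
    by (intro density_cong) (auto simp: f_def top.not_eq_extremum)
  ultimately show ?thesis by simp
qed

lemma int_nu: "g \<in> borel_measurable \<mu> \<Longrightarrow> (\<integral>\<^sup>+ x. g x \<partial>\<nu>) = (\<integral>\<^sup>+ x. ennreal (f x) * g x \<partial>\<mu>)"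
  by (subst dens) (simp add: nn_integral_density)

lemma int_f: "(\<integral>\<^sup>+ x. ennreal (f x) \<partial>\<mu>) = 1"
proof -
  have "(\<integral>\<^sup>+ x. ennreal (f x) \<partial>\<mu>) = (\<integral>\<^sup>+ x. 1 \<partial>\<nu>)" using int_nu[of "\<lambda>_. 1"] by simp
  also have "\<dots> = 1" using prob_space.emeasure_space_1[OF pn] by simp
  finally show ?thesis .
qed

lemma P_eq: "P = (\<integral>\<^sup>+ x. ennreal (f x) * ennreal (ln (f x)) \<partial>\<mu>)"
  unfolding P_def by (rule int_nu) measurable
lemma N_eq: "N = (\<integral>\<^sup>+ x. ennreal (f x) * ennreal (- ln (f x)) \<partial>\<mu>)"
  unfolding N_def by (rule int_nu) measurable

lemma H_eq: "rel_entropy \<nu> \<mu> = enn2ereal P - enn2ereal N"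
  unfolding rel_entropy_def P_def N_def f_def using ac by simp

lemma N_le: "N \<le> 1"
proof -
  have "N \<le> (\<integral>\<^sup>+ x. 1 \<partial>\<mu>)" unfolding N_eq
    by (intro nn_integral_mono E_bound f_nonneg)
  also have "\<dots> = 1" using prob_space.emeasure_space_1[OF pm] by simp
  finally show ?thesis .
qed

lemma N_fin: "N < \<infinity>" using N_le by (simp add: le_less_trans[of N 1] ennreal_one_less_top)

definition "Phi = (\<integral>\<^sup>+ x. ennreal (f x * ln (f x) - f x + 1) \<partial>\<mu>)"

lemma P_id: "P + 1 = N + 1 + Phi"
proof -
  have m1: "(\<lambda>x. ennreal (f x) * ennreal (ln (f x))) \<in> borel_measurable \<mu>" by measurable
  have m2: "(\<lambda>x. ennreal (f x) * ennreal (- ln (f x))) \<in> borel_measurable \<mu>" by measurable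
  have m3: "(\<lambda>x. ennreal (f x)) \<in> borel_measurable \<mu>" by measurable
  have m4: "(\<lambda>x. ennreal (f x * ln (f x) - f x + 1)) \<in> borel_measurable \<mu>" by measurable
  have m5: "(\<lambda>x. ennreal (f x) * ennreal (- ln (f x)) + ennreal (f x)) \<in> borel_measurable \<mu>" by measurable
  have one: "(\<integral>\<^sup>+ x. 1 \<partial>\<mu>) = 1" using prob_space.emeasure_space_1[OF pm] by simp
  have "(\<integral>\<^sup>+ x. ennreal (f x) * ennreal (ln (f x)) + 1 \<partial>\<mu>) = P + (\<integral>\<^sup>+ x. 1 \<partial>\<mu>)"
    unfolding P_eq by (rule nn_integral_add[OF m1]) simp
  then have "P + 1 = (\<integral>\<^sup>+ x. ennreal (f x) * ennreal (ln (f x)) + 1 \<partial>\<mu>)"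
    using one by simp
  also have "\<dots> = (\<integral>\<^sup>+ x. ennreal (f x) * ennreal (- ln (f x)) + ennreal (f x)
        + ennreal (f x * ln (f x) - f x + 1) \<partial>\<mu>)"
    by (intro nn_integral_cong E_id f_nonneg)
  also have "\<dots> = (\<integral>\<^sup>+ x. ennreal (f x) * ennreal (- ln (f x)) + ennreal (f x) \<partial>\<mu>) + Phi"
    unfolding Phi_def by (rule nn_integral_add[OF m5 m4])
  also have "(\<integral>\<^sup>+ x. ennreal (f x) * ennreal (- ln (f x)) + ennreal (f x) \<partial>\<mu>) = N + 1"
    unfolding N_eq int_f[symmetric] by (rule nn_integral_add[OF m2 m3])
  finally show ?thesis .
qed

lemma P_ge: "N \<le> P"
proof -
  have "1 + N \<le> 1 + P" using P_id by (simp add: le_iff_add add.commute)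
  then show ?thesis by (simp only: ennreal_add_left_cancel_le) simp
qed

lemma H_cases: "(P = \<top> \<and> rel_entropy \<nu> \<mu> = \<infinity>) \<or>
   (P \<noteq> \<top> \<and> rel_entropy \<nu> \<mu> = ereal (enn2real P - enn2real N) \<and> enn2real N \<le> enn2real P)"
proof (cases "P = \<top>")
  case True
  have "N \<noteq> \<top>" using N_fin by simp
  then obtain n where "N = ennreal n" "0 \<le> n" by (cases N) auto
  then show ?thesis using True unfolding H_eq by simp
next
  case False
  have "N \<noteq> \<top>" using N_fin by simp
  then obtain n where n: "N = ennreal n" "0 \<le> n" by (cases N) auto
  obtain p where p: "P = ennreal p" "0 \<le> p" using False by (cases P) auto
  have "n \<le> p" using P_ge n p by simp
  then show ?thesis using False n p unfolding H_eq by simp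
qed

lemma H_nonneg: "0 \<le> rel_entropy \<nu> \<mu>"
  using H_cases by auto

lemma H_zero: "rel_entropy \<nu> \<mu> = 0 \<Longrightarrow> \<nu> = \<mu>"
proof -
  assume H0: "rel_entropy \<nu> \<mu> = 0"
  have "P \<noteq> \<top>" and "enn2real P = enn2real N" using H0 H_cases by auto
  moreover have "N \<noteq> \<top>" using N_fin by simp
  ultimately have "P = N" by (metis ennreal_enn2real_if)
  then have "(N + 1) + 0 = (N + 1) + Phi" using P_id by simp
  moreover have "N + 1 \<noteq> \<top>" using N_fin by (simp add: top.not_eq_extremum)
  ultimately have "Phi = 0" by (simp only: ennreal_add_left_cancel) simp
  then have "AE x in \<mu>. ennreal (f x * ln (f x) - f x + 1) = 0"
    unfolding Phi_def by (subst (asm) nn_integral_0_iff_AE) measurable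
  then have "AE x in \<mu>. ennreal (f x) = 1"
  proof (rule AE_mp, intro AE_I2 impI)
    fix x assume "ennreal (f x * ln (f x) - f x + 1) = 0"
    then have "f x * ln (f x) - f x + 1 \<le> 0" by (simp add: ennreal_eq_0_iff)
    then have "f x * ln (f x) - f x + 1 = 0" using L2[OF f_nonneg[of x]] by linarith
    then show "ennreal (f x) = 1" using L3[OF f_nonneg[of x]] by simp
  qed
  then have e: "density \<mu> (\<lambda>x. ennreal (f x)) = density \<mu> (\<lambda>_. 1)"
    by (intro density_cong) auto
  have "\<nu> = density \<mu> (\<lambda>x. ennreal (f x))" by (rule dens)
  also have "\<dots> = density \<mu> (\<lambda>_. 1)" by (rule e)
  also have "\<dots> = \<mu>" by (rule density_1)
  finally show ?thesis .
qed

end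



lemma Pr_D: "\<mu> \<in> Pr \<Longrightarrow> prob_space \<mu> \<and> sets \<mu> = sets borel" by (simp add: Pr_def)

lemma Pr_ent: "\<mu> \<in> Pr \<Longrightarrow> \<nu> \<in> Pr \<Longrightarrow> absolutely_continuous \<mu> \<nu> \<Longrightarrow> ent \<mu> \<nu>"
  unfolding ent_def Pr_def by simp

lemma H_nonneg_gen: "\<mu> \<in> Pr \<Longrightarrow> \<nu> \<in> Pr \<Longrightarrow> 0 \<le> rel_entropy \<nu> \<mu>"
proof (cases "absolutely_continuous \<mu> \<nu>")
  case True
  assume "\<mu> \<in> Pr" "\<nu> \<in> Pr"
  then interpret ent \<mu> \<nu> using True by (rule Pr_ent)
  show ?thesis by (rule H_nonneg)
qed (simp add: rel_entropy_def)

lemma H_zero_gen: "\<mu> \<in> Pr \<Longrightarrow> \<nu> \<in> Pr \<Longrightarrow> rel_entropy \<nu> \<mu> = 0 \<Longrightarrow> \<nu> = \<mu>"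
proof (cases "absolutely_continuous \<mu> \<nu>")
  case True
  assume "\<mu> \<in> Pr" "\<nu> \<in> Pr" "rel_entropy \<nu> \<mu> = 0"
  then interpret ent \<mu> \<nu> using True by (intro Pr_ent)
  show ?thesis by (rule H_zero) fact
qed (simp add: rel_entropy_def)

lemma H_self: "\<mu> \<in> Pr \<Longrightarrow> rel_entropy \<mu> \<mu> = 0"
proof -
  assume m: "\<mu> \<in> Pr"
  have ac: "absolutely_continuous \<mu> \<mu>" by (simp add: absolutely_continuous_def)
  interpret ent \<mu> \<mu> using m m ac by (rule Pr_ent)
  interpret M: prob_space \<mu> using m by (simp add: Pr_def)
  have "AE x in \<mu>. 1 = RN_deriv \<mu> \<mu> x"
    by (rule M.RN_deriv_unique) (simp_all add: density_1)
  then have ae: "AE x in \<mu>. ln (f x) = 0" by eventually_elim (simp add: f_def)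
  have "P = 0" unfolding P_def by (subst nn_integral_cong_AE[where v="\<lambda>_. 0"]) (use ae in auto)
  moreover have "N = 0" unfolding N_def by (subst nn_integral_cong_AE[where v="\<lambda>_. 0"]) (use ae in auto)
  ultimately show ?thesis using H_eq by simp
qed

lemma dist_meas[measurable]: "(\<lambda>p. (dist (fst p) (snd p))\<^sup>2) \<in> borel_measurable (borel \<Otimes>\<^sub>M borel :: ('a::{metric_space,second_countable_topology} \<times> 'a) measure)"
  by measurable

lemma W2sq_self: "(\<mu>::'a::polish_space measure) \<in> Pr \<Longrightarrow> W2sq \<mu> \<mu> = 0"
proof -
  assume m: "\<mu> \<in> Pr"
  have sm: "sets \<mu> = sets borel" using m by (simp add: Pr_def)
  have meas: "(\<lambda>x. (x, x)) \<in> measurable \<mu> (borel \<Otimes>\<^sub>M borel)"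
  proof -
    have "(\<lambda>x. (x, x)) \<in> measurable borel (borel \<Otimes>\<^sub>M borel)" by measurable
    then show ?thesis by (subst measurable_cong_sets[OF sm refl])
  qed
  define \<pi> where "\<pi> = distr \<mu> (borel \<Otimes>\<^sub>M borel) (\<lambda>x. (x, x))"
  have c: "\<pi> \<in> couplings \<mu> \<mu>"
  proof -
    have "distr \<pi> borel fst = distr \<mu> borel (fst \<circ> (\<lambda>x. (x, x)))"
      unfolding \<pi>_def by (rule distr_distr[OF _ meas]) measurable
    also have "\<dots> = distr \<mu> borel (\<lambda>x. x)" by (simp add: comp_def)
    also have "\<dots> = \<mu>" using sm by (intro distr_id2) simp
    finally have 1: "distr \<pi> borel fst = \<mu>" .
    have "distr \<pi> borel snd = distr \<mu> borel (snd \<circ> (\<lambda>x. (x, x)))"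
      unfolding \<pi>_def by (rule distr_distr[OF _ meas]) measurable
    also have "\<dots> = distr \<mu> borel (\<lambda>x. x)" by (simp add: comp_def)
    also have "\<dots> = \<mu>" using sm by (intro distr_id2) simp
    finally have 2: "distr \<pi> borel snd = \<mu>" .
    show ?thesis unfolding couplings_def using 1 2 by (simp add: \<pi>_def)
  qed
  have i: "(\<integral>\<^sup>+ p. ennreal ((dist (fst p) (snd p))\<^sup>2) \<partial>\<pi>) = 0"
    unfolding \<pi>_def by (subst nn_integral_distr[OF meas]) simp_all
  have "W2sq \<mu> \<mu> \<le> (\<integral>\<^sup>+ p. ennreal ((dist (fst p) (snd p))\<^sup>2) \<partial>\<pi>)"
    unfolding W2sq_def by (rule INF_lower[OF c])
  then have "W2sq \<mu> \<mu> \<le> 0" using i by simp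
  then show ?thesis by simp
qed




context
  fixes \<mu> :: "'a::polish_space measure"
  assumes m: "\<mu> \<in> Pr"
begin

lemma fin_real: "\<nu> \<in> Pr_fin \<mu> \<Longrightarrow> rel_entropy \<nu> \<mu> = ereal (real_of_ereal (rel_entropy \<nu> \<mu>)) \<and> 0 \<le> real_of_ereal (rel_entropy \<nu> \<mu>)"
proof -
  assume n: "\<nu> \<in> Pr_fin \<mu>"
  have "0 \<le> rel_entropy \<nu> \<mu>" using n m H_nonneg_gen by (auto simp: Pr_fin_def)
  moreover have "rel_entropy \<nu> \<mu> < \<infinity>" using n by (simp add: Pr_fin_def)
  ultimately show ?thesis by (cases "rel_entropy \<nu> \<mu>") auto
qed

lemma mu_fin: "\<mu> \<in> Pr_fin \<mu>"
  using m H_self[OF m] by (simp add: Pr_fin_def)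

lemma W2_self: "W2 \<mu> \<mu> = 0"
  using W2sq_self[OF m] by (simp add: W2_def)

lemma F_self: "F a \<mu> \<mu> = 0"
  using W2_self H_self[OF m] by (simp add: F_def zero_ereal_def)

lemma F_iff: "0 < a \<Longrightarrow> \<nu> \<in> Pr_fin \<mu> \<Longrightarrow>
   0 \<le> F a \<mu> \<nu> \<longleftrightarrow> enn2ereal (W2sq \<nu> \<mu>) \<le> ereal a * rel_entropy \<nu> \<mu>"
proof -
  assume a: "0 < a" and n: "\<nu> \<in> Pr_fin \<mu>"
  define h where "h = real_of_ereal (rel_entropy \<nu> \<mu>)"
  have H: "rel_entropy \<nu> \<mu> = ereal h" and h: "0 \<le> h" using fin_real[OF n] by (auto simp: h_def)
  show ?thesis
  proof (cases "W2sq \<nu> \<mu> = \<top>")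
    case True
    then show ?thesis by (simp add: F_def W2_def H)
  next
    case False
    then obtain w where w: "W2sq \<nu> \<mu> = ennreal w" "0 \<le> w" by (cases "W2sq \<nu> \<mu>") auto
    have "0 \<le> F a \<mu> \<nu> \<longleftrightarrow> sqrt w \<le> sqrt (a * h)"
      using w by (simp add: F_def W2_def H)
    also have "\<dots> \<longleftrightarrow> w \<le> a * h" by simp
    also have "\<dots> \<longleftrightarrow> enn2ereal (W2sq \<nu> \<mu>) \<le> ereal a * rel_entropy \<nu> \<mu>"
      using w by (simp add: H)
    finally show ?thesis .
  qed
qed

lemma T2_iff: "0 < a \<Longrightarrow> T2 a \<mu> \<longleftrightarrow> (\<forall>\<nu>\<in>Pr_fin \<mu>. 0 \<le> F a \<mu> \<nu>)"
proof -
  assume a: "0 < a"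
  have "(\<forall>\<nu>\<in>Pr. enn2ereal (W2sq \<nu> \<mu>) \<le> ereal a * rel_entropy \<nu> \<mu>)
      \<longleftrightarrow> (\<forall>\<nu>\<in>Pr_fin \<mu>. enn2ereal (W2sq \<nu> \<mu>) \<le> ereal a * rel_entropy \<nu> \<mu>)"
  proof
    assume "\<forall>\<nu>\<in>Pr_fin \<mu>. enn2ereal (W2sq \<nu> \<mu>) \<le> ereal a * rel_entropy \<nu> \<mu>"
    moreover have "\<nu> \<in> Pr \<Longrightarrow> \<nu> \<notin> Pr_fin \<mu> \<Longrightarrow> rel_entropy \<nu> \<mu> = \<infinity>" for \<nu>
      by (auto simp: Pr_fin_def top.not_eq_extremum)
    moreover have "ereal a * \<infinity> = \<infinity>" using a by simp
    ultimately show "\<forall>\<nu>\<in>Pr. enn2ereal (W2sq \<nu> \<mu>) \<le> ereal a * rel_entropy \<nu> \<mu>"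
      by (metis PInfty_eq_infinity ereal_less_eq(1))
  qed (auto simp: Pr_fin_def)
  then show ?thesis using F_iff[OF a] by (simp add: T2_def)
qed

lemma Argmin_iff: "\<mu> \<in> Argmin a \<mu> \<longleftrightarrow> (\<forall>\<nu>\<in>Pr_fin \<mu>. 0 \<le> F a \<mu> \<nu>)"
proof -
  have "\<mu> \<in> Argmin a \<mu> \<longleftrightarrow> 0 = (INF \<nu>' \<in> Pr_fin \<mu>. F a \<mu> \<nu>')"
    using mu_fin F_self by (simp add: Argmin_def)
  also have "\<dots> \<longleftrightarrow> 0 \<le> (INF \<nu>' \<in> Pr_fin \<mu>. F a \<mu> \<nu>')"
    using INF_lower[OF mu_fin, of "F a \<mu>"] F_self[of a] by (auto intro: order.antisym)
  also have "\<dots> \<longleftrightarrow> (\<forall>\<nu>\<in>Pr_fin \<mu>. 0 \<le> F a \<mu> \<nu>)" by (simp add: le_INF_iff)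
  finally show ?thesis .
qed

end



lemma (in prob_space) distr_pair_snd': "sigma_finite_measure N \<Longrightarrow> distr (M \<Otimes>\<^sub>M N) N snd = N"
proof (intro measure_eqI)
  assume sf: "sigma_finite_measure N"
  fix A assume A: "A \<in> sets (distr (M \<Otimes>\<^sub>M N) N snd)"
  from A have "emeasure (distr (M \<Otimes>\<^sub>M N) N snd) A = emeasure (M \<Otimes>\<^sub>M N) (space M \<times> A)"
    by (auto simp add: emeasure_distr space_pair_measure dest: sets.sets_into_space intro!: arg_cong2[where f=emeasure])
  with A sf show "emeasure (distr (M \<Otimes>\<^sub>M N) N snd) A = emeasure N A"
    by (simp add: sigma_finite_measure.emeasure_pair_measure_Times emeasure_space_1)
qed simp

lemma main_ineq:
  fixes \<mu> \<nu> :: "'a::polish_space measure" and a :: real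
  assumes m: "\<mu> \<in> Pr" and n: "\<nu> \<in> Pr" and ac: "absolutely_continuous \<mu> \<nu>" and a: "0 < a"
  shows "W2sq \<nu> \<mu> + ennreal a * ent.N \<mu> \<nu> \<le> ennreal a * ent.P \<mu> \<nu>
     + ennreal a * (\<integral>\<^sup>+ x. \<integral>\<^sup>+ y. ennreal (exp ((dist x y)\<^sup>2 / a)) \<partial>\<mu> \<partial>\<mu>)"
proof -
  interpret ent \<mu> \<nu> using m n ac by (rule Pr_ent)
  interpret M: prob_space \<mu> using m by (simp add: Pr_def)
  interpret V: prob_space \<nu> using n by (simp add: Pr_def)
  interpret MV: pair_sigma_finite \<nu> \<mu> by unfold_locales
  have sm: "sets \<mu> = sets borel" and sn: "sets \<nu> = sets borel" using m n by (auto simp: Pr_def)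
  have gm0: "(\<lambda>p. ennreal ((dist (fst p) (snd p))\<^sup>2)) \<in> borel_measurable (borel \<Otimes>\<^sub>M borel :: ('a \<times> 'a) measure)"
    by measurable
  have em0: "(\<lambda>p. ennreal (exp ((dist (fst p) (snd p))\<^sup>2 / a))) \<in> borel_measurable (borel \<Otimes>\<^sub>M borel :: ('a \<times> 'a) measure)"
    by measurable
  have gmMM: "(\<lambda>p. ennreal ((dist (fst p) (snd p))\<^sup>2)) \<in> borel_measurable (\<mu> \<Otimes>\<^sub>M \<mu>)"
    using gm0 by (subst measurable_cong_sets[OF sets_pair_measure_cong[OF sm sm] refl])
  have emMM: "(\<lambda>p. ennreal (exp ((dist (fst p) (snd p))\<^sup>2 / a))) \<in> borel_measurable (\<mu> \<Otimes>\<^sub>M \<mu>)"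
    using em0 by (subst measurable_cong_sets[OF sets_pair_measure_cong[OF sm sm] refl])
  have gmVM: "(\<lambda>p. ennreal ((dist (fst p) (snd p))\<^sup>2)) \<in> borel_measurable (\<nu> \<Otimes>\<^sub>M \<mu>)"
    using gm0 by (subst measurable_cong_sets[OF sets_pair_measure_cong[OF sn sm] refl])
  define D where "D = (\<lambda>x. \<integral>\<^sup>+ y. ennreal ((dist x y)\<^sup>2) \<partial>\<mu>)"
  define E where "E = (\<lambda>x. \<integral>\<^sup>+ y. ennreal (exp ((dist x y)\<^sup>2 / a)) \<partial>\<mu>)"
  have Dm: "D \<in> borel_measurable \<mu>"
    using M.borel_measurable_nn_integral_fst[OF gmMM] by (simp add: D_def)
  have Em: "E \<in> borel_measurable \<mu>"
    using M.borel_measurable_nn_integral_fst[OF emMM] by (simp add: E_def)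
  have ym: "(\<lambda>y. ennreal ((dist x y)\<^sup>2)) \<in> borel_measurable \<mu>" for x
  proof -
    have "(\<lambda>y. ennreal ((dist x y)\<^sup>2)) \<in> borel_measurable (borel :: 'a measure)" by measurable
    then show ?thesis by (subst measurable_cong_sets[OF sm refl])
  qed
  have yem: "(\<lambda>y. ennreal (exp ((dist x y)\<^sup>2 / a))) \<in> borel_measurable \<mu>" for x
  proof -
    have "(\<lambda>y. ennreal (exp ((dist x y)\<^sup>2 / a))) \<in> borel_measurable (borel :: 'a measure)" by measurable
    then show ?thesis by (subst measurable_cong_sets[OF sm refl])
  qed
  have cpl: "\<nu> \<Otimes>\<^sub>M \<mu> \<in> couplings \<nu> \<mu>"
  proof -
    have "distr (\<nu> \<Otimes>\<^sub>M \<mu>) borel fst = distr (\<nu> \<Otimes>\<^sub>M \<mu>) \<nu> fst"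
      using sn by (intro distr_cong) simp_all
    also have "\<dots> = \<nu>" by (rule M.distr_pair_fst)
    finally have 1: "distr (\<nu> \<Otimes>\<^sub>M \<mu>) borel fst = \<nu>" .
    have "distr (\<nu> \<Otimes>\<^sub>M \<mu>) borel snd = distr (\<nu> \<Otimes>\<^sub>M \<mu>) \<mu> snd"
      using sm by (intro distr_cong) simp_all
    also have "\<dots> = \<mu>" by (rule V.distr_pair_snd') unfold_locales
    finally have 2: "distr (\<nu> \<Otimes>\<^sub>M \<mu>) borel snd = \<mu>" .
    show ?thesis unfolding couplings_def using 1 2 sets_pair_measure_cong[OF sn sm] by simp
  qed
  have "W2sq \<nu> \<mu> \<le> (\<integral>\<^sup>+ p. ennreal ((dist (fst p) (snd p))\<^sup>2) \<partial>(\<nu> \<Otimes>\<^sub>M \<mu>))"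
    unfolding W2sq_def by (rule INF_lower[OF cpl])
  also have "\<dots> = (\<integral>\<^sup>+ x. D x \<partial>\<nu>)"
    unfolding D_def using M.nn_integral_fst[OF gmVM] by simp
  also have "\<dots> = (\<integral>\<^sup>+ x. ennreal (f x) * D x \<partial>\<mu>)" by (rule int_nu[OF Dm])
  finally have W: "W2sq \<nu> \<mu> \<le> (\<integral>\<^sup>+ x. ennreal (f x) * D x \<partial>\<mu>)" .
  have pw: "ennreal (f x) * D x + ennreal a * (ennreal (f x) * ennreal (- ln (f x)))
     \<le> ennreal a * (ennreal (f x) * ennreal (ln (f x))) + ennreal a * E x" for x
  proof -
    define C where "C = ennreal a * (ennreal (f x) * ennreal (- ln (f x)))"
    define C' where "C' = ennreal a * (ennreal (f x) * ennreal (ln (f x)))"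
    have "ennreal (f x) * D x + C = (\<integral>\<^sup>+ y. ennreal (f x) * ennreal ((dist x y)\<^sup>2) + C \<partial>\<mu>)"
      unfolding D_def
      by (subst nn_integral_add) (use ym in \<open>simp_all add: nn_integral_cmult M.emeasure_space_1\<close>)
    also have "\<dots> \<le> (\<integral>\<^sup>+ y. C' + ennreal a * ennreal (exp ((dist x y)\<^sup>2 / a)) \<partial>\<mu>)"
      unfolding C_def C'_def using a
      by (intro nn_integral_mono E_young f_nonneg) simp_all
    also have "\<dots> = C' + ennreal a * E x"
      unfolding E_def
      by (subst nn_integral_add) (use yem in \<open>simp_all add: nn_integral_cmult M.emeasure_space_1\<close>)
    finally show ?thesis unfolding C_def C'_def .
  qed
  have "(\<integral>\<^sup>+ x. ennreal (f x) * D x \<partial>\<mu>) + ennreal a * N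
     = (\<integral>\<^sup>+ x. ennreal (f x) * D x + ennreal a * (ennreal (f x) * ennreal (- ln (f x))) \<partial>\<mu>)"
    unfolding N_eq using Dm by (subst nn_integral_add) (simp_all add: nn_integral_cmult)
  also have "\<dots> \<le> (\<integral>\<^sup>+ x. ennreal a * (ennreal (f x) * ennreal (ln (f x))) + ennreal a * E x \<partial>\<mu>)"
    by (intro nn_integral_mono pw)
  also have "\<dots> = ennreal a * P + ennreal a * (\<integral>\<^sup>+ x. E x \<partial>\<mu>)"
    unfolding P_eq using Em by (subst nn_integral_add) (simp_all add: nn_integral_cmult)
  finally have "(\<integral>\<^sup>+ x. ennreal (f x) * D x \<partial>\<mu>) + ennreal a * N \<le> ennreal a * P + ennreal a * (\<integral>\<^sup>+ x. E x \<partial>\<mu>)" .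
  then show ?thesis using W unfolding E_def by (meson add_right_mono order_trans)
qed




lemma part1:
  fixes \<mu> :: "'a::polish_space measure" and a :: real
  assumes m: "\<mu> \<in> Pr" and a: "0 < a"
    and Z: "(\<integral>\<^sup>+ x. \<integral>\<^sup>+ y. ennreal (exp ((dist x y)\<^sup>2 / a)) \<partial>\<mu> \<partial>\<mu>) < \<infinity>"
  shows "\<exists>c::real. \<forall>\<nu> \<in> Pr_fin \<mu>. ereal c \<le> F a \<mu> \<nu>"
proof -
  define Zv where "Zv = (\<integral>\<^sup>+ x. \<integral>\<^sup>+ y. ennreal (exp ((dist x y)\<^sup>2 / a)) \<partial>\<mu> \<partial>\<mu>)"
  obtain z where z: "Zv = ennreal z" "0 \<le> z" using Z unfolding Zv_def[symmetric]
    by (cases Zv) auto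
  show ?thesis
  proof (intro exI ballI)
    fix \<nu> assume nf: "\<nu> \<in> Pr_fin \<mu>"
    have n: "\<nu> \<in> Pr" using nf by (simp add: Pr_fin_def)
    have ac: "absolutely_continuous \<mu> \<nu>"
      using nf by (auto simp: Pr_fin_def rel_entropy_def split: if_splits)
    interpret ent \<mu> \<nu> using m n ac by (rule Pr_ent)
    have fin: "rel_entropy \<nu> \<mu> < \<infinity>" using nf by (simp add: Pr_fin_def)
    have Pf: "P \<noteq> \<top>" and H: "rel_entropy \<nu> \<mu> = ereal (enn2real P - enn2real N)"
      and NP: "enn2real N \<le> enn2real P" using H_cases fin by auto
    define p where "p = enn2real P"
    define nn where "nn = enn2real N"
    have Pp: "P = ennreal p" using Pf by (simp add: p_def top.not_eq_extremum)
    have Nn: "N = ennreal nn" using N_fin by (simp add: nn_def)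
    have p0: "0 \<le> p" "0 \<le> nn" by (simp_all add: p_def nn_def)
    have MI: "W2sq \<nu> \<mu> + ennreal a * ennreal nn \<le> ennreal a * ennreal p + ennreal a * ennreal z"
      using main_ineq[OF m n ac a] unfolding Zv_def[symmetric] z Pp Nn .
    have rhs: "ennreal a * ennreal p + ennreal a * ennreal z = ennreal (a * p + a * z)"
      using a p0 z by (simp add: ennreal_mult ennreal_plus)
    have "W2sq \<nu> \<mu> \<noteq> \<top>"
      using MI unfolding rhs by (auto simp: top_unique)
    then obtain w where w: "W2sq \<nu> \<mu> = ennreal w" "0 \<le> w" by (cases "W2sq \<nu> \<mu>") auto
    have "ennreal (w + a * nn) \<le> ennreal (a * p + a * z)"
      using MI unfolding rhs w using a p0 w by (simp add: ennreal_mult ennreal_plus)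
    moreover have ap: "0 \<le> a * p + a * z" using a p0 z by simp
    ultimately have "w + a * nn \<le> a * p + a * z" using ennreal_le_iff[OF ap] by blast
    then have wle: "w \<le> a * (p - nn) + a * z" by (simp add: algebra_simps)
    have h0: "0 \<le> a * (p - nn)" using a NP by (simp add: p_def nn_def)
    have az: "0 \<le> a * z" using a z by simp
    have "sqrt w \<le> sqrt (a * (p - nn) + a * z)" using wle by simp
    also have "\<dots> \<le> sqrt (a * (p - nn)) + sqrt (a * z)" by (rule sqrt_add_le_add_sqrt[OF h0 az])
    finally have sw: "sqrt w \<le> sqrt (a * (p - nn)) + sqrt (a * z)" .
    have "F a \<mu> \<nu> = ereal (sqrt (a * (p - nn)) - sqrt w)"
      unfolding F_def W2_def H using w by (simp add: p_def nn_def)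
    then show "ereal (- sqrt (a * z)) \<le> F a \<mu> \<nu>" using sw by simp
  qed
qed

lemma T2_mono:
  fixes \<mu> :: "'a::polish_space measure"
  assumes m: "\<mu> \<in> Pr" and T: "T2 a \<mu>" and aa: "0 < a" "a \<le> a'"
  shows "T2 a' \<mu>"
  unfolding T2_def
proof
  fix \<nu> :: "'a measure" assume n: "\<nu> \<in> Pr"
  have "enn2ereal (W2sq \<nu> \<mu>) \<le> ereal a * rel_entropy \<nu> \<mu>" using T n by (simp add: T2_def)
  also have "\<dots> \<le> ereal a' * rel_entropy \<nu> \<mu>"
    using H_nonneg_gen[OF m n] aa by (intro ereal_mult_right_mono) simp_all
  finally show "enn2ereal (W2sq \<nu> \<mu>) \<le> ereal a' * rel_entropy \<nu> \<mu>" .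
qed

lemma real_lim_le:
  fixes w a h :: real
  assumes h: "0 \<le> h" and all: "\<forall>a'>a. w \<le> a' * h"
  shows "w \<le> a * h"
proof (rule ccontr)
  assume "\<not> w \<le> a * h"
  then have d: "0 < w - a * h" by simp
  define e where "e = (w - a * h) / (2 * (h + 1))"
  have e0: "0 < e" using d h by (simp add: e_def)
  have "w \<le> (a + e) * h" using all e0 by simp
  moreover have "e * h < w - a * h"
  proof -
    have "e * h = (w - a * h) * (h / (2 * (h + 1)))" by (simp add: e_def)
    also have "\<dots> < (w - a * h) * 1"
      using d h by (intro mult_strict_left_mono) (simp_all add: field_simps)
    finally show ?thesis by simp
  qed
  ultimately show False by (simp add: algebra_simps)
qed

lemma part3:
  fixes \<mu> :: "'a::polish_space measure" and a :: real
  assumes m: "\<mu> \<in> Pr" and a: "0 < a"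
  shows "T2 a \<mu> \<longleftrightarrow> (\<forall>a'>a. Argmin a' \<mu> = {\<mu>})"
proof
  assume T: "T2 a \<mu>"
  show "\<forall>a'>a. Argmin a' \<mu> = {\<mu>}"
  proof (intro allI impI)
    fix a' assume aa: "a < a'"
    have a': "0 < a'" using a aa by simp
    have T': "T2 a' \<mu>" using T2_mono[OF m T a] aa by simp
    have mA: "\<mu> \<in> Argmin a' \<mu>" using T' T2_iff[OF m a'] Argmin_iff[OF m] by simp
    have INF0: "(INF \<nu>' \<in> Pr_fin \<mu>. F a' \<mu> \<nu>') = 0"
      using mA F_self[OF m, of a'] by (simp add: Argmin_def)
    show "Argmin a' \<mu> = {\<mu>}"
    proof
      show "{\<mu>} \<subseteq> Argmin a' \<mu>" using mA by simp
      show "Argmin a' \<mu> \<subseteq> {\<mu>}"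
      proof
        fix \<nu> assume nA: "\<nu> \<in> Argmin a' \<mu>"
        have nf: "\<nu> \<in> Pr_fin \<mu>" and F0: "F a' \<mu> \<nu> = 0" using nA INF0 by (auto simp: Argmin_def)
        have n: "\<nu> \<in> Pr" using nf by (simp add: Pr_fin_def)
        define h where "h = real_of_ereal (rel_entropy \<nu> \<mu>)"
        have H: "rel_entropy \<nu> \<mu> = ereal h" and h: "0 \<le> h"
          using fin_real[OF m nf] by (auto simp: h_def)
        have "W2sq \<nu> \<mu> \<noteq> \<top>" using F0 by (auto simp: F_def W2_def)
        then obtain w where w: "W2sq \<nu> \<mu> = ennreal w" "0 \<le> w" by (cases "W2sq \<nu> \<mu>") auto
        have "sqrt (a' * h) = sqrt w" using F0 w by (simp add: F_def W2_def H)
        then have e1: "a' * h = w" using h w a' by simp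
        have "enn2ereal (W2sq \<nu> \<mu>) \<le> ereal a * rel_entropy \<nu> \<mu>" using T n by (simp add: T2_def)
        then have "w \<le> a * h" using w by (simp add: H)
        then have "(a' - a) * h \<le> 0" using e1 by (simp add: algebra_simps)
        then have "h = 0" using h aa by (simp add: mult_le_0_iff)
        then have "rel_entropy \<nu> \<mu> = 0" using H by (simp add: zero_ereal_def)
        then show "\<nu> \<in> {\<mu>}" using H_zero_gen[OF m n] by simp
      qed
    qed
  qed
next
  assume A: "\<forall>a'>a. Argmin a' \<mu> = {\<mu>}"
  have T': "T2 a' \<mu>" if "a < a'" for a'
  proof -
    have "\<mu> \<in> Argmin a' \<mu>" using A that by simp
    then show ?thesis using T2_iff[OF m, of a'] Argmin_iff[OF m] a that by simp
  qed
  show "T2 a \<mu>" unfolding T2_def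
  proof
    fix \<nu> :: "'a measure" assume n: "\<nu> \<in> Pr"
    show "enn2ereal (W2sq \<nu> \<mu>) \<le> ereal a * rel_entropy \<nu> \<mu>"
    proof (cases "rel_entropy \<nu> \<mu> = \<infinity>")
      case True then show ?thesis using a by simp
    next
      case False
      have "0 \<le> rel_entropy \<nu> \<mu>" by (rule H_nonneg_gen[OF m n])
      with False obtain h where H: "rel_entropy \<nu> \<mu> = ereal h" and h: "0 \<le> h"
        by (cases "rel_entropy \<nu> \<mu>") auto
      have all: "enn2ereal (W2sq \<nu> \<mu>) \<le> ereal (a' * h)" if "a < a'" for a'
      proof -
        have "enn2ereal (W2sq \<nu> \<mu>) \<le> ereal a' * rel_entropy \<nu> \<mu>"
          using T'[OF that] n by (simp add: T2_def)
        then show ?thesis using H by simp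
      qed
      have "W2sq \<nu> \<mu> \<noteq> \<top>" using all[of "a + 1"] by auto
      then obtain w where w: "W2sq \<nu> \<mu> = ennreal w" "0 \<le> w" by (cases "W2sq \<nu> \<mu>") auto
      have "\<forall>a'>a. w \<le> a' * h" using all w by simp
      then have "w \<le> a * h" by (rule real_lim_le[OF h])
      then show ?thesis using w H by simp
    qed
  qed
qed



theorem lemma1p1:
  fixes \<mu> :: "'a::polish_space measure" and a :: real
  assumes "\<mu> \<in> Pr" and "a > 0"
  shows "((\<integral>\<^sup>+ x. \<integral>\<^sup>+ y. ennreal (exp ((dist x y)\<^sup>2 / a)) \<partial>\<mu> \<partial>\<mu>) < \<infinity>
           \<longrightarrow> (\<exists>c::real. \<forall>\<nu> \<in> Pr_fin \<mu>. ereal c \<le> F a \<mu> \<nu>))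
       \<and> (T2 a \<mu> \<longleftrightarrow> \<mu> \<in> Argmin a \<mu>)
       \<and> (T2 a \<mu> \<longleftrightarrow> (\<forall>a'>a. Argmin a' \<mu> = {\<mu>}))"
proof (intro conjI impI)
  show "\<exists>c::real. \<forall>\<nu> \<in> Pr_fin \<mu>. ereal c \<le> F a \<mu> \<nu>"
    if "(\<integral>\<^sup>+ x. \<integral>\<^sup>+ y. ennreal (exp ((dist x y)\<^sup>2 / a)) \<partial>\<mu> \<partial>\<mu>) < \<infinity>"
    by (rule part1[OF assms(1,2) that])
  show "T2 a \<mu> \<longleftrightarrow> \<mu> \<in> Argmin a \<mu>"
    unfolding T2_iff[OF assms(1,2)] Argmin_iff[OF assms(1)] ..
  show "T2 a \<mu> \<longleftrightarrow> (\<forall>a'>a. Argmin a' \<mu> = {\<mu>})"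
    by (rule part3[OF assms(1,2)])
qed


end
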